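(* Let $\mathbf{H}\in\mathbb{R}^{M\times N}$ be arbitrary, $\sigma>0$, $k\in[N]$, and consider observations $\mathbf{y}=\mathbf{H}\mathbf{x}+\mathbf{n}$ with $\mathbf{n}\sim\mathcal{N}(\mathbf{0},\sigma^2\mathbf{I})$ and parameter function $g(\mathbf{x})=x_k$. Let $\mathcal{X}\subseteq\mathbb{R}^N$ contain a nonempty open set, let $\mathbf{x}_0\in\mathcal{X}$, and let $c:\mathbb{R}^N\to\mathbb{R}$ be valid at $\mathbf{x}_0$ for the parameter set $\mathbb{R}^N$. Let $M_{\mathrm{LGM}}(c,\mathbf{x}_0)$ be the minimum achievable variance at $\mathbf{x}_0$ with bias prescribed as $c$ on $\mathbb{R}^N$, and $M'(c,\mathbf{x}_0)$ the minimum achievable variance at $\mathbf{x}_0$ with bias prescribed as $c$ on $\mathcal{X}$ only. Then $M'(c,\mathbf{x}_0)=M_{\mathrm{LGM}}(c,\mathbf{x}_0)$. Moreover, the LMV estimator at $\mathbf{x}_0$ for parameter set $\mathbb{R}^N$ and bias $c$ is also the LMV estimator at $\mathbf{x}_0$ for parameter set $\mathcal{X}$ and bias $c|_{\mathcal{X}}$.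
   Context: For a parameter set $\mathcal{Y}\subseteq\mathbb{R}^N$ containing $\mathbf{x}_0$ and bias function $c$ on $\mathcal{Y}$: an estimator $\hat g:\mathbb{R}^M\to\mathbb{R}$ is allowed if $v(\hat g;\mathbf{x}_0)=\mathsf{E}_{\mathbf{x}_0}\{(\hat g(\mathbf{y})-\mathsf{E}_{\mathbf{x}_0}\hat g(\mathbf{y}))^2\}<\infty$ and $\mathsf{E}_{\mathbf{x}}\{\hat g(\mathbf{y})\}-x_k=c(\mathbf{x})$ for all $\mathbf{x}\in\mathcal{Y}$; $c$ is valid at $\mathbf{x}_0$ if an allowed estimator exists; the minimum achievable variance is the infimum of $v(\hat g;\mathbf{x}_0)$ over allowed estimators ($+\infty$ if none), and an LMV estimator is an allowed estimator attaining it. *)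

theory Defs
  imports "HOL-Analysis.Analysis" "HOL-Probability.Probability"
begin

text \<open>Linear Gaussian model y = H x + n, n ~ N(0, sigma^2 I), with
  x in R^N (type real^'n) and y in R^M (type real^'m).\<close>

definition gauss_dens :: "real \<Rightarrow> real^'m \<Rightarrow> real" where
  "gauss_dens \<sigma> z =
     (2 * pi * \<sigma>\<^sup>2) powr (- real CARD('m) / 2) * exp (- (norm z)\<^sup>2 / (2 * \<sigma>\<^sup>2))"

definition obs_meas :: "real^'n^'m \<Rightarrow> real \<Rightarrow> real^'n \<Rightarrow> (real^'m) measure" where
  "obs_meas H \<sigma> x = density lborel (\<lambda>y. ennreal (gauss_dens \<sigma> (y - H *v x)))"

definition lgm_mean :: "real^'n^'m \<Rightarrow> real \<Rightarrow> real^'n \<Rightarrow> (real^'m \<Rightarrow> real) \<Rightarrow> real" where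
  "lgm_mean H \<sigma> x g = integral\<^sup>L (obs_meas H \<sigma> x) g"

definition lgm_var :: "real^'n^'m \<Rightarrow> real \<Rightarrow> real^'n \<Rightarrow> (real^'m \<Rightarrow> real) \<Rightarrow> real" where
  "lgm_var H \<sigma> x g = integral\<^sup>L (obs_meas H \<sigma> x) (\<lambda>y. (g y - lgm_mean H \<sigma> x g)\<^sup>2)"

definition allowed ::
  "real^'n^'m \<Rightarrow> real \<Rightarrow> 'n \<Rightarrow> (real^'n) set \<Rightarrow> (real^'n \<Rightarrow> real) \<Rightarrow> real^'n
    \<Rightarrow> (real^'m \<Rightarrow> real) \<Rightarrow> bool" where
  "allowed H \<sigma> k Y c x0 g \<longleftrightarrow>
     g \<in> borel_measurable borel \<and>
     integrable (obs_meas H \<sigma> x0) (\<lambda>y. (g y - lgm_mean H \<sigma> x0 g)\<^sup>2) \<and>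
     (\<forall>x\<in>Y. integrable (obs_meas H \<sigma> x) g \<and> lgm_mean H \<sigma> x g - x $ k = c x)"

definition valid_bias ::
  "real^'n^'m \<Rightarrow> real \<Rightarrow> 'n \<Rightarrow> (real^'n) set \<Rightarrow> (real^'n \<Rightarrow> real) \<Rightarrow> real^'n \<Rightarrow> bool" where
  "valid_bias H \<sigma> k Y c x0 \<longleftrightarrow> (\<exists>g. allowed H \<sigma> k Y c x0 g)"

text \<open>Minimum achievable variance (+\<infinity> if there is no allowed estimator).\<close>
definition min_var ::
  "real^'n^'m \<Rightarrow> real \<Rightarrow> 'n \<Rightarrow> (real^'n) set \<Rightarrow> (real^'n \<Rightarrow> real) \<Rightarrow> real^'n \<Rightarrow> ereal" where
  "min_var H \<sigma> k Y c x0 =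
     (INF g \<in> {g. allowed H \<sigma> k Y c x0 g}. ereal (lgm_var H \<sigma> x0 g))"

definition is_LMV ::
  "real^'n^'m \<Rightarrow> real \<Rightarrow> 'n \<Rightarrow> (real^'n) set \<Rightarrow> (real^'n \<Rightarrow> real) \<Rightarrow> real^'n
    \<Rightarrow> (real^'m \<Rightarrow> real) \<Rightarrow> bool" where
  "is_LMV H \<sigma> k Y c x0 g \<longleftrightarrow>
     allowed H \<sigma> k Y c x0 g \<and> ereal (lgm_var H \<sigma> x0 g) = min_var H \<sigma> k Y c x0"

end

theory Submission
  imports Defs
begin


lemma ennreal_prod_lt_top:
  fixes f :: "'a \<Rightarrow> ennreal"
  shows "(\<And>i. i \<in> A \<Longrightarrow> f i < \<infinity>) \<Longrightarrow> prod f A < \<infinity>"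
  by (induction A rule: infinite_finite_induct) (auto simp: ennreal_mult_less_top)

lemma gauss_exp_nn_finite:
  fixes \<sigma> :: real assumes s: "\<sigma> > 0"
  shows "(\<integral>\<^sup>+y. ennreal (exp (- (norm (y::real^'m))\<^sup>2 / (2 * \<sigma>\<^sup>2))) \<partial>lborel) < \<infinity>"
proof -
  have eq: "exp (- (norm y)\<^sup>2 / (2 * \<sigma>\<^sup>2)) = (\<Prod>b\<in>Basis. exp (- (y \<bullet> b)\<^sup>2 / (2 * \<sigma>\<^sup>2)))"
    for y :: "real^'m"
  proof -
    have "(norm y)\<^sup>2 = (\<Sum>b\<in>Basis. (y \<bullet> b)\<^sup>2)"
      by (subst power2_norm_eq_inner, subst euclidean_inner, simp add: power2_eq_square)
    then have "- (norm y)\<^sup>2 / (2 * \<sigma>\<^sup>2) = (\<Sum>b\<in>Basis. - (y \<bullet> b)\<^sup>2 / (2 * \<sigma>\<^sup>2))"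
      by (simp add: sum_divide_distrib sum_negf)
    then show ?thesis by (simp add: exp_sum)
  qed
  have "(\<integral>\<^sup>+y. ennreal (exp (- (norm (y::real^'m))\<^sup>2 / (2 * \<sigma>\<^sup>2))) \<partial>lborel)
      = (\<integral>\<^sup>+y. (\<Prod>b\<in>(Basis::(real^'m) set). ennreal (exp (- (y \<bullet> b)\<^sup>2 / (2 * \<sigma>\<^sup>2)))) \<partial>lborel)"
    by (subst prod_ennreal, simp, subst eq, rule refl)
  also have "\<dots> = (\<Prod>b\<in>(Basis::(real^'m) set). (\<integral>\<^sup>+t. ennreal (exp (- t\<^sup>2 / (2 * \<sigma>\<^sup>2))) \<partial>lborel))"
    by (rule nn_integral_lborel_prod) auto
  also have "\<dots> < \<infinity>"
  proof -
    have i: "integrable lborel (\<lambda>t. sqrt (2 * pi * \<sigma>\<^sup>2) * normal_density 0 \<sigma> t)"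
      using integrable_normal_density[OF s] by simp
    have e: "(\<lambda>t. sqrt (2 * pi * \<sigma>\<^sup>2) * normal_density 0 \<sigma> t) = (\<lambda>t. exp (- t\<^sup>2 / (2 * \<sigma>\<^sup>2)))"
      using s by (auto simp: normal_density_def fun_eq_iff)
    have "(\<integral>\<^sup>+t. ennreal (exp (- t\<^sup>2 / (2 * \<sigma>\<^sup>2))) \<partial>lborel) < \<infinity>"
      using i unfolding e integrable_iff_bounded by simp
    then show ?thesis by (intro ennreal_prod_lt_top) simp
  qed
  finally show ?thesis .
qed

lemma gauss_dens_nonneg: "0 \<le> gauss_dens \<sigma> z"
  by (simp add: gauss_dens_def)

lemma gauss_dens_pos: "\<sigma> \<noteq> 0 \<Longrightarrow> 0 < gauss_dens \<sigma> z"
  by (simp add: gauss_dens_def)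

lemma gauss_dens_meas[measurable]:
  "(\<lambda>y. gauss_dens \<sigma> (y - z)) \<in> borel_measurable borel"
  unfolding gauss_dens_def by measurable

lemma gauss_integrable:
  fixes \<sigma> :: real assumes s: "\<sigma> > 0"
  shows "integrable lborel (\<lambda>y::real^'m. gauss_dens \<sigma> (y - z))"
proof -
  have "(\<integral>\<^sup>+y. ennreal (exp (- (norm (y - z))\<^sup>2 / (2 * \<sigma>\<^sup>2))) \<partial>lborel)
     = (\<integral>\<^sup>+y. ennreal (exp (- (norm ((y::real^'m) - z))\<^sup>2 / (2 * \<sigma>\<^sup>2))) \<partial>distr lborel borel ((+) z))"
    by (simp add: lborel_distr_plus)
  also have "\<dots> = (\<integral>\<^sup>+y. ennreal (exp (- (norm ((z + y) - z))\<^sup>2 / (2 * \<sigma>\<^sup>2))) \<partial>lborel)"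
    by (rule nn_integral_distr) auto
  also have "\<dots> < \<infinity>" using gauss_exp_nn_finite[OF s] by simp
  finally have "integrable lborel (\<lambda>y::real^'m. exp (- (norm (y - z))\<^sup>2 / (2 * \<sigma>\<^sup>2)))"
    unfolding integrable_iff_bounded by simp
  then show ?thesis unfolding gauss_dens_def by (rule integrable_mult_right)
qed

lemma norm_identity:
  fixes y z z0 :: "'a::real_inner"
  shows "2 * (norm (y - z))\<^sup>2 - (norm (y - z0))\<^sup>2 = (norm (y - (2 *\<^sub>R z - z0)))\<^sup>2 - 2 * (norm (z - z0))\<^sup>2"
  by (simp add: power2_norm_eq_inner inner_simps inner_commute algebra_simps)

lemma gauss_sq:
  fixes z z0 y :: "real^'m"
  assumes "\<sigma> \<noteq> 0"
  shows "(gauss_dens \<sigma> (y - z))\<^sup>2 = exp ((norm (z - z0))\<^sup>2 / \<sigma>\<^sup>2) * gauss_dens \<sigma> (y - (2 *\<^sub>R z - z0)) * gauss_dens \<sigma> (y - z0)"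
proof -
  have e: "2 * (- (norm (y - z))\<^sup>2 / (2 * \<sigma>\<^sup>2)) = (norm (z - z0))\<^sup>2 / \<sigma>\<^sup>2 + (- (norm (y - (2 *\<^sub>R z - z0)))\<^sup>2 / (2 * \<sigma>\<^sup>2)) + (- (norm (y - z0))\<^sup>2 / (2 * \<sigma>\<^sup>2))"
  proof -
    define A where "A = (norm (y - z))\<^sup>2"
    define B where "B = (norm (z - z0))\<^sup>2"
    define D where "D = (norm (y - (2 *\<^sub>R z - z0)))\<^sup>2"
    define E where "E = (norm (y - z0))\<^sup>2"
    have h: "- 2 * A = 2 * B - D - E" using norm_identity[of y z z0] unfolding A_def B_def D_def E_def by linarith
    have "B / \<sigma>\<^sup>2 + (- D / (2 * \<sigma>\<^sup>2)) + (- E / (2 * \<sigma>\<^sup>2)) = (2 * B - D - E) / (2 * \<sigma>\<^sup>2)"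
      using assms by (simp add: field_simps)
    also have "\<dots> = 2 * (- A / (2 * \<sigma>\<^sup>2))" unfolding h[symmetric] by simp
    finally show ?thesis unfolding A_def B_def D_def E_def by simp
  qed
  have x: "(exp (- (norm (y - z))\<^sup>2 / (2 * \<sigma>\<^sup>2)))\<^sup>2 = exp ((norm (z - z0))\<^sup>2 / \<sigma>\<^sup>2) * exp (- (norm (y - (2 *\<^sub>R z - z0)))\<^sup>2 / (2 * \<sigma>\<^sup>2)) * exp (- (norm (y - z0))\<^sup>2 / (2 * \<sigma>\<^sup>2))"
    unfolding power2_eq_square[of "exp _"] exp_add[symmetric] mult_2[symmetric] e by simp
  show ?thesis
    unfolding gauss_dens_def power_mult_distrib x by (simp only: ac_simps power2_eq_square)
qed

lemma gauss_line:
  fixes z1 w y :: "real^'m"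
  assumes "\<sigma> \<noteq> 0"
  shows "gauss_dens \<sigma> (y - (z1 + t *\<^sub>R w)) = gauss_dens \<sigma> (y - z1) * exp (t * (((y - z1) \<bullet> w) / \<sigma>\<^sup>2)) * exp (- t\<^sup>2 * ((norm w)\<^sup>2 / (2 * \<sigma>\<^sup>2)))"
proof -
  have n: "(norm (y - (z1 + t *\<^sub>R w)))\<^sup>2 = (norm (y - z1))\<^sup>2 - 2 * t * ((y - z1) \<bullet> w) + t\<^sup>2 * (norm w)\<^sup>2"
    by (simp add: power2_norm_eq_inner inner_simps inner_commute algebra_simps power2_eq_square[of t])
  have e: "- (norm (y - (z1 + t *\<^sub>R w)))\<^sup>2 / (2 * \<sigma>\<^sup>2) = - (norm (y - z1))\<^sup>2 / (2 * \<sigma>\<^sup>2) + t * (((y - z1) \<bullet> w) / \<sigma>\<^sup>2) + (- t\<^sup>2 * ((norm w)\<^sup>2 / (2 * \<sigma>\<^sup>2)))"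
    unfolding n using assms by (simp add: field_simps)
  show ?thesis unfolding gauss_dens_def e exp_add by (simp add: algebra_simps)
qed



lemma int_shift:
  fixes h :: "real^'m \<Rightarrow> real"
  assumes s: "\<sigma> > 0" and hm[measurable]: "h \<in> borel_measurable borel"
    and h2: "integrable lborel (\<lambda>y. (h y)\<^sup>2 * gauss_dens \<sigma> (y - z0))"
  shows "integrable lborel (\<lambda>y. h y * gauss_dens \<sigma> (y - z))"
proof -
  have i: "integrable lborel (\<lambda>y. (h y)\<^sup>2 * gauss_dens \<sigma> (y - z0) + exp ((norm (z - z0))\<^sup>2 / \<sigma>\<^sup>2) * gauss_dens \<sigma> (y - (2 *\<^sub>R z - z0)))"
    by (intro Bochner_Integration.integrable_add h2 integrable_mult_right gauss_integrable s)
  have m: "(\<lambda>y. h y * gauss_dens \<sigma> (y - z)) \<in> borel_measurable lborel" by measurable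
  have ae: "AE y in lborel. norm (h y * gauss_dens \<sigma> (y - z)) \<le> norm ((h y)\<^sup>2 * gauss_dens \<sigma> (y - z0) + exp ((norm (z - z0))\<^sup>2 / \<sigma>\<^sup>2) * gauss_dens \<sigma> (y - (2 *\<^sub>R z - z0)))"
  proof (rule AE_I2)
    fix y
    define p0 where "p0 = gauss_dens \<sigma> (y - z0)"
    define pz where "pz = gauss_dens \<sigma> (y - z)"
    define q where "q = exp ((norm (z - z0))\<^sup>2 / \<sigma>\<^sup>2) * gauss_dens \<sigma> (y - (2 *\<^sub>R z - z0))"
    have p0: "p0 > 0" unfolding p0_def using s by (simp add: gauss_dens_pos)
    have pz: "pz \<ge> 0" unfolding pz_def by (simp add: gauss_dens_nonneg)
    have q: "q \<ge> 0" unfolding q_def by (simp add: gauss_dens_nonneg)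
    have sq: "pz\<^sup>2 = q * p0" unfolding pz_def q_def p0_def using gauss_sq[of \<sigma> y z z0] s by simp
    define a where "a = \<bar>h y\<bar> * p0"
    have a: "a \<ge> 0" unfolding a_def using p0 by simp
    have "0 \<le> (a - pz)\<^sup>2" by simp
    then have "0 \<le> a\<^sup>2 - 2 * a * pz + pz\<^sup>2" by (simp only: power2_diff)
    moreover have "0 \<le> a * pz" using a pz by simp
    ultimately have "a * pz \<le> a\<^sup>2 + pz\<^sup>2" by linarith
    moreover have "a\<^sup>2 = (h y)\<^sup>2 * p0 * p0" unfolding a_def by (simp add: power_mult_distrib power2_eq_square)
    ultimately have "a * pz \<le> (h y)\<^sup>2 * p0 * p0 + q * p0" using sq by simp
    then have "\<bar>h y\<bar> * pz * p0 \<le> ((h y)\<^sup>2 * p0 + q) * p0"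
      unfolding a_def by (simp add: algebra_simps)
    then have "\<bar>h y\<bar> * pz \<le> (h y)\<^sup>2 * p0 + q" using p0 by simp
    moreover have "0 \<le> (h y)\<^sup>2 * p0 + q" using p0 q by simp
    ultimately show "norm (h y * gauss_dens \<sigma> (y - z)) \<le> norm ((h y)\<^sup>2 * gauss_dens \<sigma> (y - z0) + exp ((norm (z - z0))\<^sup>2 / \<sigma>\<^sup>2) * gauss_dens \<sigma> (y - (2 *\<^sub>R z - z0)))"
      unfolding p0_def pz_def q_def by (simp add: abs_mult gauss_dens_nonneg)
  qed
  show ?thesis by (rule Bochner_Integration.integrable_bound[OF i m ae])
qed



lemma exp_partial_le: "(\<Sum>n<N. \<bar>x::real\<bar>^n / fact n) \<le> exp \<bar>x\<bar>"
proof -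
  have s: "(\<lambda>n. \<bar>x\<bar>^n / fact n) sums exp \<bar>x\<bar>"
    using exp_converges[of "\<bar>x\<bar>"] by (simp add: divide_inverse_commute)
  have "(\<Sum>n<N. \<bar>x\<bar>^n / fact n) \<le> (\<Sum>n. \<bar>x\<bar>^n / fact n)"
    by (rule sum_le_suminf) (use s in \<open>auto simp: sums_iff\<close>)
  then show ?thesis using s by (simp add: sums_iff)
qed

lemma exp_term_le: "\<bar>x::real\<bar>^n / fact n \<le> exp \<bar>x\<bar>"
proof -
  have "(\<Sum>k<Suc n. \<bar>x\<bar>^k / fact k) \<le> exp \<bar>x\<bar>" by (rule exp_partial_le)
  moreover have "\<bar>x\<bar>^n / fact n \<le> (\<Sum>k<Suc n. \<bar>x\<bar>^k / fact k)"
    by (simp add: sum_nonneg)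
  ultimately show ?thesis by linarith
qed

lemma exp_abs_le: "exp \<bar>x::real\<bar> \<le> exp x + exp (- x)"
  by (cases "x \<ge> 0") (auto simp: add_increasing2 add_increasing)

lemma series_exchange:
  fixes \<psi> a :: "'a \<Rightarrow> real"
  assumes [measurable]: "\<psi> \<in> borel_measurable M" "a \<in> borel_measurable M"
    and int: "\<And>t. integrable M (\<lambda>y. \<psi> y * exp (t * a y))"
  shows "(\<lambda>n. (\<integral>y. \<psi> y * a y ^ n / fact n \<partial>M) * t ^ n) sums (\<integral>y. \<psi> y * exp (t * a y) \<partial>M)"
proof -
  define w where "w = (\<lambda>y. \<bar>\<psi> y * exp (t * a y)\<bar> + \<bar>\<psi> y * exp ((- t) * a y)\<bar>)"
  have wi: "integrable M w" unfolding w_def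
    by (intro Bochner_Integration.integrable_add integrable_abs int)
  have wb: "\<bar>\<psi> y\<bar> * exp \<bar>t * a y\<bar> \<le> w y" for y
  proof -
    have "\<bar>\<psi> y\<bar> * exp \<bar>t * a y\<bar> \<le> \<bar>\<psi> y\<bar> * (exp (t * a y) + exp (- (t * a y)))"
      by (intro mult_left_mono exp_abs_le) simp
    then show ?thesis unfolding w_def by (simp add: abs_mult algebra_simps)
  qed
  define s where "s = (\<lambda>N y. \<Sum>n<N. \<psi> y * (t * a y) ^ n / fact n)"
  have lim: "AE y in M. (\<lambda>N. s N y) \<longlonglongrightarrow> \<psi> y * exp (t * a y)"
  proof (rule AE_I2)
    fix y
    have "(\<lambda>n. (t * a y)^n / fact n) sums exp (t * a y)"
      using exp_converges[of "t * a y"] by (simp add: divide_inverse_commute)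
    then have "(\<lambda>n. \<psi> y * ((t * a y)^n / fact n)) sums (\<psi> y * exp (t * a y))"
      by (rule sums_mult)
    then show "(\<lambda>N. s N y) \<longlonglongrightarrow> \<psi> y * exp (t * a y)"
      unfolding s_def sums_def by (simp add: algebra_simps)
  qed
  have bound: "AE y in M. norm (s N y) \<le> w y" for N
  proof (rule AE_I2)
    fix y
    have "\<bar>s N y\<bar> \<le> (\<Sum>n<N. \<bar>\<psi> y * (t * a y) ^ n / fact n\<bar>)"
      unfolding s_def by (rule sum_abs)
    also have "\<dots> = \<bar>\<psi> y\<bar> * (\<Sum>n<N. \<bar>t * a y\<bar> ^ n / fact n)"
      by (simp add: sum_distrib_left abs_mult power_abs)
    also have "\<dots> \<le> \<bar>\<psi> y\<bar> * exp \<bar>t * a y\<bar>"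
      by (intro mult_left_mono exp_partial_le) simp
    also have "\<dots> \<le> w y" by (rule wb)
    finally show "norm (s N y) \<le> w y" by simp
  qed
  have "(\<lambda>N. integral\<^sup>L M (s N)) \<longlonglongrightarrow> (\<integral>y. \<psi> y * exp (t * a y) \<partial>M)"
    by (rule integral_dominated_convergence[OF _ _ wi lim bound]) (auto simp: s_def)
  moreover have "integral\<^sup>L M (s N) = (\<Sum>n<N. (\<integral>y. \<psi> y * a y ^ n / fact n \<partial>M) * t ^ n)" for N
  proof -
    have ti: "integrable M (\<lambda>y. \<psi> y * a y ^ n / fact n)" for n
    proof (rule Bochner_Integration.integrable_bound[where f = "\<lambda>y. \<bar>\<psi> y * exp (1 * a y)\<bar> + \<bar>\<psi> y * exp ((- 1) * a y)\<bar>"])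
      show "integrable M (\<lambda>y. \<bar>\<psi> y * exp (1 * a y)\<bar> + \<bar>\<psi> y * exp ((- 1) * a y)\<bar>)"
        by (intro Bochner_Integration.integrable_add integrable_abs int)
      show "(\<lambda>y. \<psi> y * a y ^ n / fact n) \<in> borel_measurable M" by measurable
      show "AE y in M. norm (\<psi> y * a y ^ n / fact n) \<le> norm (\<bar>\<psi> y * exp (1 * a y)\<bar> + \<bar>\<psi> y * exp ((- 1) * a y)\<bar>)"
      proof (rule AE_I2)
        fix y
        have "\<bar>\<psi> y * a y ^ n / fact n\<bar> = \<bar>\<psi> y\<bar> * (\<bar>a y\<bar> ^ n / fact n)"
          by (simp add: abs_mult power_abs)
        also have "\<dots> \<le> \<bar>\<psi> y\<bar> * (exp (a y) + exp (- a y))"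
          by (intro mult_left_mono order.trans[OF exp_term_le exp_abs_le]) simp
        finally show "norm (\<psi> y * a y ^ n / fact n) \<le> norm (\<bar>\<psi> y * exp (1 * a y)\<bar> + \<bar>\<psi> y * exp ((- 1) * a y)\<bar>)"
          by (simp add: abs_mult algebra_simps)
      qed
    qed
    have "integral\<^sup>L M (s N) = (\<integral>y. (\<Sum>n<N. t ^ n * (\<psi> y * a y ^ n / fact n)) \<partial>M)"
      unfolding s_def by (simp add: power_mult_distrib algebra_simps)
    also have "\<dots> = (\<Sum>n<N. (\<integral>y. t ^ n * (\<psi> y * a y ^ n / fact n) \<partial>M))"
      by (rule Bochner_Integration.integral_sum) (intro integrable_mult_right ti)
    also have "\<dots> = (\<Sum>n<N. (\<integral>y. \<psi> y * a y ^ n / fact n \<partial>M) * t ^ n)"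
      by (simp add: mult.commute)
    finally show ?thesis .
  qed
  ultimately show ?thesis unfolding sums_def by simp
qed

lemma powser_vanish:
  fixes c :: "nat \<Rightarrow> real"
  assumes sums: "\<And>t. (\<lambda>n. c n * t^n) sums G t" and d: "\<delta> > 0"
    and z: "\<And>t. \<bar>t\<bar> < \<delta> \<Longrightarrow> G t = 0"
  shows "c n = 0"
proof (rule ccontr)
  assume "c n \<noteq> 0"
  then have ex: "\<exists>n. c n \<noteq> 0" by blast
  define n0 where "n0 = (LEAST n. c n \<noteq> 0)"
  have cn0: "c n0 \<noteq> 0" unfolding n0_def by (rule LeastI_ex[OF ex])
  have below: "c k = 0" if "k < n0" for k
    using not_less_Least[of k "\<lambda>n. c n \<noteq> 0"] that unfolding n0_def by blast
  define P where "P t = (\<Sum>k. c (k + n0) * t^k)" for t :: real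
  have Psums: "(\<lambda>k. c (k + n0) * t^k) sums (G t / t ^ n0)" if "t \<noteq> 0" for t
  proof -
    have "(\<lambda>k. c (k + n0) * t^(k + n0)) sums (G t - (\<Sum>i<n0. c i * t^i))"
      using sums_split_initial_segment[OF sums[of t], of n0] by simp
    also have "(\<Sum>i<n0. c i * t^i) = 0" by (simp add: below)
    finally have "(\<lambda>k. c (k + n0) * t^(k + n0) / t ^ n0) sums (G t / t ^ n0)"
      by (intro sums_divide) simp
    then show ?thesis using that by (simp add: power_add)
  qed
  have summ: "summable (\<lambda>k. c (k + n0) * y^k)" for y
    by (cases "y = 0") (auto intro: sums_summable[OF Psums])
  have "isCont P 0" unfolding P_def by (rule isCont_powser_converges_everywhere[OF summ])
  moreover have "P 0 = c n0" unfolding P_def using powser_zero[of "\<lambda>k. c (k + n0)"] by simp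
  ultimately have l1: "(P \<longlongrightarrow> c n0) (at 0)" by (simp add: isCont_def)
  have ev: "\<forall>t. t \<noteq> 0 \<and> dist t 0 < \<delta> \<longrightarrow> P t = 0"
  proof (intro allI impI)
    fix t :: real assume "t \<noteq> 0 \<and> dist t 0 < \<delta>"
    then have "t \<noteq> 0" "\<bar>t\<bar> < \<delta>" by auto
    then show "P t = 0" unfolding P_def using Psums[of t] z[of t] by (simp add: sums_iff)
  qed
  have "eventually (\<lambda>t. P t = 0) (at (0::real))"
    unfolding eventually_at using d ev by blast
  then have l2: "(P \<longlongrightarrow> 0) (at 0)" by (rule tendsto_eventually)
  have "c n0 = 0" using tendsto_unique[OF _ l1 l2] by simp
  with cn0 show False by simp
qed



lemma line_zero:
  fixes h :: "real^'m \<Rightarrow> real"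
  assumes s: "\<sigma> > 0" and hm[measurable]: "h \<in> borel_measurable borel"
    and hi: "\<And>z. integrable lborel (\<lambda>y. h y * gauss_dens \<sigma> (y - z))"
    and d: "\<delta> > 0"
    and zero: "\<And>t. \<bar>t\<bar> < \<delta> \<Longrightarrow> (\<integral>y. h y * gauss_dens \<sigma> (y - (z1 + t *\<^sub>R w)) \<partial>lborel) = 0"
  shows "(\<integral>y. h y * gauss_dens \<sigma> (y - (z1 + w)) \<partial>lborel) = 0"
proof -
  define \<psi> where "\<psi> y = h y * gauss_dens \<sigma> (y - z1)" for y
  define a where "a y = ((y - z1) \<bullet> w) / \<sigma>\<^sup>2" for y
  define \<beta> where "\<beta> = (norm w)\<^sup>2 / (2 * \<sigma>\<^sup>2)"
  have [measurable]: "\<psi> \<in> borel_measurable lborel" unfolding \<psi>_def by measurable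
  have "continuous_on UNIV a" unfolding a_def using s by (intro continuous_intros) auto
  then have "a \<in> borel_measurable borel" by (rule borel_measurable_continuous_onI)
  then have [measurable]: "a \<in> borel_measurable lborel" by simp
  have eqline: "h y * gauss_dens \<sigma> (y - (z1 + t *\<^sub>R w)) = \<psi> y * exp (t * a y) * exp (- t\<^sup>2 * \<beta>)" for y t
    unfolding \<psi>_def a_def \<beta>_def using gauss_line[of \<sigma> y z1 t w] s by simp
  have eq2: "\<psi> y * exp (t * a y) = h y * gauss_dens \<sigma> (y - (z1 + t *\<^sub>R w)) * exp (t\<^sup>2 * \<beta>)" for y t
    unfolding eqline by (simp add: mult.assoc exp_add[symmetric])
  have int: "integrable lborel (\<lambda>y. \<psi> y * exp (t * a y))" for t
    unfolding eq2 by (intro integrable_mult_left hi)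
  define G where "G t = (\<integral>y. \<psi> y * exp (t * a y) \<partial>lborel)" for t
  have FG: "(\<integral>y. h y * gauss_dens \<sigma> (y - (z1 + t *\<^sub>R w)) \<partial>lborel) = G t * exp (- t\<^sup>2 * \<beta>)" for t
    unfolding eqline G_def by (rule integral_mult_left_zero)
  define c where "c n = (\<integral>y. \<psi> y * a y ^ n / fact n \<partial>lborel)" for n
  have sums: "(\<lambda>n. c n * t ^ n) sums G t" for t
    unfolding c_def G_def by (rule series_exchange) (auto intro: int)
  have Gz: "G t = 0" if "\<bar>t\<bar> < \<delta>" for t
    using zero[OF that] FG[of t] by simp
  have "c n = 0" for n by (rule powser_vanish[OF sums d Gz])
  then have "G 1 = 0" using sums[of 1] by (simp add: sums_iff)
  then show ?thesis using FG[of 1] by simp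
qed

lemma om_integrable:
  assumes [measurable]: "f \<in> borel_measurable borel"
  shows "integrable (obs_meas H \<sigma> x) f \<longleftrightarrow> integrable lborel (\<lambda>y. f y * gauss_dens \<sigma> (y - H *v x))"
  unfolding obs_meas_def
  by (subst integrable_density) (auto simp: gauss_dens_nonneg mult.commute)

lemma om_integral:
  assumes [measurable]: "f \<in> borel_measurable borel"
  shows "integral\<^sup>L (obs_meas H \<sigma> x) f = (\<integral>y. f y * gauss_dens \<sigma> (y - H *v x) \<partial>lborel)"
  unfolding obs_meas_def
  by (subst integral_density) (auto simp: gauss_dens_nonneg mult.commute)

lemma sq3: "((p::real) - q + r)\<^sup>2 \<le> 3 * (p\<^sup>2 + q\<^sup>2 + r\<^sup>2)"
proof -
  have "0 \<le> (p + q)\<^sup>2 + (q + r)\<^sup>2 + (p - r)\<^sup>2" by simp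
  then show ?thesis by (simp add: power2_eq_square algebra_simps)
qed



lemma allowed_transfer:
  fixes H :: "real^'n^'m" and \<sigma> :: real and k :: 'n
    and X U :: "(real^'n) set" and x0 :: "real^'n" and c :: "real^'n \<Rightarrow> real"
  assumes s: "\<sigma> > 0" and U: "open U" "U \<noteq> {}" "U \<subseteq> X"
    and g0: "allowed H \<sigma> k UNIV c x0 g0" and g: "allowed H \<sigma> k X c x0 g"
  shows "allowed H \<sigma> k UNIV c x0 g"
proof -
  have gm[measurable]: "g \<in> borel_measurable borel"
    and gv: "integrable (obs_meas H \<sigma> x0) (\<lambda>y. (g y - lgm_mean H \<sigma> x0 g)\<^sup>2)"
    and gX: "\<And>x. x \<in> X \<Longrightarrow> integrable (obs_meas H \<sigma> x) g \<and> lgm_mean H \<sigma> x g - x $ k = c x"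
    using g unfolding allowed_def by auto
  have g0m[measurable]: "g0 \<in> borel_measurable borel"
    and g0v: "integrable (obs_meas H \<sigma> x0) (\<lambda>y. (g0 y - lgm_mean H \<sigma> x0 g0)\<^sup>2)"
    and g0X: "\<And>x. integrable (obs_meas H \<sigma> x) g0 \<and> lgm_mean H \<sigma> x g0 - x $ k = c x"
    using g0 unfolding allowed_def by auto
  define m where "m = lgm_mean H \<sigma> x0 g"
  define m0 where "m0 = lgm_mean H \<sigma> x0 g0"
  define h where "h y = g y - g0 y" for y
  have hm[measurable]: "h \<in> borel_measurable borel" unfolding h_def by measurable
  have ci: "integrable (obs_meas H \<sigma> x0) (\<lambda>y. 3 * (m - m0)\<^sup>2)"
    by (subst om_integrable) (auto intro!: integrable_mult_left gauss_integrable s)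
  have "integrable (obs_meas H \<sigma> x0) (\<lambda>y. (h y)\<^sup>2)"
  proof (rule Bochner_Integration.integrable_bound)
    show "integrable (obs_meas H \<sigma> x0) (\<lambda>y. 3 * (g y - m)\<^sup>2 + 3 * (g0 y - m0)\<^sup>2 + 3 * (m - m0)\<^sup>2)"
    proof -
      have a1: "integrable (obs_meas H \<sigma> x0) (\<lambda>y. 3 * (g y - m)\<^sup>2)"
        using gv unfolding m_def by (rule integrable_mult_right)
      have a2: "integrable (obs_meas H \<sigma> x0) (\<lambda>y. 3 * (g0 y - m0)\<^sup>2)"
        using g0v unfolding m0_def by (rule integrable_mult_right)
      show ?thesis using Bochner_Integration.integrable_add[OF Bochner_Integration.integrable_add[OF a1 a2] ci] by simp
    qed
    show "(\<lambda>y. (h y)\<^sup>2) \<in> borel_measurable (obs_meas H \<sigma> x0)"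
      unfolding obs_meas_def by measurable
    show "AE y in obs_meas H \<sigma> x0. norm ((h y)\<^sup>2) \<le> norm (3 * (g y - m)\<^sup>2 + 3 * (g0 y - m0)\<^sup>2 + 3 * (m - m0)\<^sup>2)"
    proof (rule AE_I2)
      fix y
      have "h y = (g y - m) - (g0 y - m0) + (m - m0)" unfolding h_def by simp
      then have "(h y)\<^sup>2 \<le> 3 * ((g y - m)\<^sup>2 + (g0 y - m0)\<^sup>2 + (m - m0)\<^sup>2)"
        using sq3 by metis
      then show "norm ((h y)\<^sup>2) \<le> norm (3 * (g y - m)\<^sup>2 + 3 * (g0 y - m0)\<^sup>2 + 3 * (m - m0)\<^sup>2)"
        by simp
    qed
  qed
  then have h2: "integrable lborel (\<lambda>y. (h y)\<^sup>2 * gauss_dens \<sigma> (y - H *v x0))"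
    by (subst (asm) om_integrable) auto
  have hi: "integrable lborel (\<lambda>y. h y * gauss_dens \<sigma> (y - z))" for z
    by (rule int_shift[OF s hm h2])
  have gi: "integrable lborel (\<lambda>y. g y * gauss_dens \<sigma> (y - H *v x))" if "x \<in> X" for x
    using gX[OF that] by (subst (asm) om_integrable) auto
  have g0i: "integrable lborel (\<lambda>y. g0 y * gauss_dens \<sigma> (y - H *v x))" for x
    using g0X[of x] by (subst (asm) om_integrable) auto
  have gmean: "(\<integral>y. g y * gauss_dens \<sigma> (y - H *v x) \<partial>lborel) = x $ k + c x" if "x \<in> X" for x
    using gX[OF that] unfolding lgm_mean_def by (subst (asm) om_integral) auto
  have g0mean: "(\<integral>y. g0 y * gauss_dens \<sigma> (y - H *v x) \<partial>lborel) = x $ k + c x" for x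
    using g0X[of x] unfolding lgm_mean_def by (subst (asm) om_integral) auto
  have hsplit: "(\<lambda>y. h y * gauss_dens \<sigma> (y - H *v x)) = (\<lambda>y. g y * gauss_dens \<sigma> (y - H *v x) - g0 y * gauss_dens \<sigma> (y - H *v x))" for x
    unfolding h_def by (simp add: fun_eq_iff algebra_simps)
  have FU: "(\<integral>y. h y * gauss_dens \<sigma> (y - H *v x) \<partial>lborel) = 0" if "x \<in> U" for x
  proof -
    have xX: "x \<in> X" using that U by auto
    show ?thesis unfolding hsplit
      by (subst Bochner_Integration.integral_diff[OF gi[OF xX] g0i]) (simp add: gmean[OF xX] g0mean)
  qed
  obtain x1 where x1: "x1 \<in> U" using U by auto
  obtain r where r: "r > 0" "ball x1 r \<subseteq> U" using U(1) x1 by (meson openE)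
  have F0: "(\<integral>y. h y * gauss_dens \<sigma> (y - H *v x) \<partial>lborel) = 0" for x
  proof -
    define \<delta> where "\<delta> = r / (norm (x - x1) + 1)"
    have np: "norm (x - x1) + 1 > 0" by (smt (verit) norm_ge_zero)
    have dpos: "\<delta> > 0" unfolding \<delta>_def using r np by simp
    have "(\<integral>y. h y * gauss_dens \<sigma> (y - (H *v x1 + H *v (x - x1))) \<partial>lborel) = 0"
    proof (rule line_zero[OF s hm hi dpos])
      fix t :: real assume t: "\<bar>t\<bar> < \<delta>"
      have "dist x1 (x1 + t *\<^sub>R (x - x1)) = \<bar>t\<bar> * norm (x - x1)"
        by (simp add: dist_norm)
      also have "\<dots> \<le> \<bar>t\<bar> * (norm (x - x1) + 1)" by (simp add: mult_left_mono)
      also have "\<dots> < \<delta> * (norm (x - x1) + 1)"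
        using t np by (intro mult_strict_right_mono) auto
      also have "\<dots> = r" unfolding \<delta>_def using np by simp
      finally have "x1 + t *\<^sub>R (x - x1) \<in> U" using r by auto
      from FU[OF this]
      show "(\<integral>y. h y * gauss_dens \<sigma> (y - (H *v x1 + t *\<^sub>R (H *v (x - x1)))) \<partial>lborel) = 0"
        by (simp add: matrix_vector_right_distrib matrix_vector_mult_scaleR)
    qed
    moreover have "H *v x1 + H *v (x - x1) = H *v x"
      by (simp add: matrix_vector_right_distrib[symmetric])
    ultimately show ?thesis by simp
  qed
  have gsplit: "(\<lambda>y. g y * gauss_dens \<sigma> (y - H *v x)) = (\<lambda>y. h y * gauss_dens \<sigma> (y - H *v x) + g0 y * gauss_dens \<sigma> (y - H *v x))" for x
    unfolding h_def by (simp add: fun_eq_iff algebra_simps)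
  have "integrable (obs_meas H \<sigma> x) g \<and> lgm_mean H \<sigma> x g - x $ k = c x" for x
  proof
    show "integrable (obs_meas H \<sigma> x) g"
      by (subst om_integrable) (auto simp: gsplit intro!: Bochner_Integration.integrable_add hi g0i)
    show "lgm_mean H \<sigma> x g - x $ k = c x"
      unfolding lgm_mean_def
      by (subst om_integral, simp, subst gsplit, subst Bochner_Integration.integral_add[OF hi g0i])
         (simp add: F0 g0mean)
  qed
  then show ?thesis using g unfolding allowed_def by auto
qed

theorem theorem13:
  fixes H :: "real^'n^'m" and \<sigma> :: real and k :: 'n
    and X :: "(real^'n) set" and x0 :: "real^'n" and c :: "real^'n \<Rightarrow> real"
  assumes "\<sigma> > 0"
    and "\<exists>U. open U \<and> U \<noteq> {} \<and> U \<subseteq> X"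
    and "x0 \<in> X"
    and "valid_bias H \<sigma> k UNIV c x0"
  shows "min_var H \<sigma> k X c x0 = min_var H \<sigma> k UNIV c x0
         \<and> (\<forall>g. is_LMV H \<sigma> k UNIV c x0 g \<longrightarrow> is_LMV H \<sigma> k X c x0 g)"
proof -
  obtain U where U: "open U" "U \<noteq> {}" "U \<subseteq> X" using assms(2) by blast
  obtain g0 where g0: "allowed H \<sigma> k UNIV c x0 g0" using assms(4) unfolding valid_bias_def by blast
  have eq: "allowed H \<sigma> k X c x0 g \<longleftrightarrow> allowed H \<sigma> k UNIV c x0 g" for g
  proof
    assume "allowed H \<sigma> k X c x0 g"
    then show "allowed H \<sigma> k UNIV c x0 g" by (rule allowed_transfer[OF assms(1) U g0])
  next
    assume "allowed H \<sigma> k UNIV c x0 g"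
    then show "allowed H \<sigma> k X c x0 g" unfolding allowed_def by auto
  qed
  have mv: "min_var H \<sigma> k X c x0 = min_var H \<sigma> k UNIV c x0"
    unfolding min_var_def eq ..
  show ?thesis using mv eq unfolding is_LMV_def by auto
qed

end
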